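(* Let $n$ be an integer, let $\mathfrak{M}=(S,\mathcal{L})$ be a $\big(\binom{n+1}{2}_{\,n-1}\ \binom{n+1}{3}_{\,3}\big)$-configuration, and let $X\subseteq S$ with $|X|=n$ be such that $\mathfrak{M}$ freely contains the complete graph $K_X$. Let $Y=S\setminus X$ (the point set of the subconfiguration complementary to $K_X$). Then $Y$ is a hyperplane of $\mathfrak{M}$.
   Context: A $(v_r\ b_k)$-configuration is a partial linear space (two distinct points lie on at most one line) with $v$ points and $b$ lines, each point on exactly $r$ lines and each line containing exactly $k$ points. For distinct collinear points $a_1,a_2$ let $\overline{a_1a_2}$ denote the line through them. $\mathfrak{M}$ freely contains the complete graph $K_X$ ($X\subseteq S$) iff any two distinct points of $X$ are collinear, no three points of $X$ lie on a common line, and for any disjoint $2$-subsets $\{a_1,a_2\},\{b_1,b_2\}$ of $X$ the lines $\overline{a_1a_2}$ and $\overline{b_1b_2}$ are disjoint. A subspace is a set of points containing every line that meets it in at least two points; a hyperplane is a proper subspace meeting every line. *)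

theory Defs
  imports Main
begin

definition partial_linear_space :: "'a set \<Rightarrow> 'a set set \<Rightarrow> bool" where
  "partial_linear_space S L \<longleftrightarrow>
     (\<forall>l\<in>L. l \<subseteq> S) \<and>
     (\<forall>l1\<in>L. \<forall>l2\<in>L. \<forall>a b. a \<noteq> b \<and> a \<in> l1 \<and> b \<in> l1 \<and> a \<in> l2 \<and> b \<in> l2 \<longrightarrow> l1 = l2)"

definition configuration :: "'a set \<Rightarrow> 'a set set \<Rightarrow> nat \<Rightarrow> nat \<Rightarrow> nat \<Rightarrow> nat \<Rightarrow> bool" where
  "configuration S L v r b k \<longleftrightarrow>
     partial_linear_space S L \<and> finite S \<and> finite L \<and>
     card S = v \<and> card L = b \<and>
     (\<forall>p\<in>S. card {l\<in>L. p \<in> l} = r) \<and>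
     (\<forall>l\<in>L. card l = k)"

definition line_through :: "'a set set \<Rightarrow> 'a \<Rightarrow> 'a \<Rightarrow> 'a set" where
  "line_through L a b = (THE l. l \<in> L \<and> a \<in> l \<and> b \<in> l)"

definition freely_contains_complete_graph :: "'a set \<Rightarrow> 'a set set \<Rightarrow> 'a set \<Rightarrow> bool" where
  "freely_contains_complete_graph S L X \<longleftrightarrow>
     X \<subseteq> S \<and>
     (\<forall>a\<in>X. \<forall>b\<in>X. a \<noteq> b \<longrightarrow> (\<exists>l\<in>L. a \<in> l \<and> b \<in> l)) \<and>
     (\<forall>l\<in>L. \<not> (\<exists>a\<in>X. \<exists>b\<in>X. \<exists>c\<in>X. a \<noteq> b \<and> a \<noteq> c \<and> b \<noteq> c \<and> a \<in> l \<and> b \<in> l \<and> c \<in> l)) \<and>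
     (\<forall>a1\<in>X. \<forall>a2\<in>X. \<forall>b1\<in>X. \<forall>b2\<in>X.
        a1 \<noteq> a2 \<and> b1 \<noteq> b2 \<and> {a1, a2} \<inter> {b1, b2} = {} \<longrightarrow>
        line_through L a1 a2 \<inter> line_through L b1 b2 = {})"

definition subspace :: "'a set \<Rightarrow> 'a set set \<Rightarrow> 'a set \<Rightarrow> bool" where
  "subspace S L Z \<longleftrightarrow> Z \<subseteq> S \<and>
     (\<forall>l\<in>L. (\<exists>a\<in>l. \<exists>b\<in>l. a \<noteq> b \<and> a \<in> Z \<and> b \<in> Z) \<longrightarrow> l \<subseteq> Z)"

definition hyperplane :: "'a set \<Rightarrow> 'a set set \<Rightarrow> 'a set \<Rightarrow> bool" where
  "hyperplane S L Z \<longleftrightarrow> subspace S L Z \<and> Z \<noteq> S \<and> (\<forall>l\<in>L. l \<inter> Z \<noteq> {})"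

end

theory Submission
  imports Defs
begin

theorem proposition1p7:
  fixes S :: "'a set" and L :: "'a set set" and X :: "'a set" and n :: nat
  assumes "n \<ge> 1"
    and "configuration S L ((n + 1) choose 2) (n - 1) ((n + 1) choose 3) 3"
    and "X \<subseteq> S" and "card X = n"
    and "freely_contains_complete_graph S L X"
  shows "hyperplane S L (S - X)"
proof -
  have finS: "finite S" and finL: "finite L" and rr: "\<forall>p\<in>S. card {l\<in>L. p \<in> l} = n - 1"
    and kk: "\<forall>l\<in>L. card l = 3" and pls: "partial_linear_space S L"
    using assms(2) unfolding configuration_def by auto
  have lS: "\<forall>l\<in>L. l \<subseteq> S" using pls unfolding partial_linear_space_def by auto
  have col: "\<forall>a\<in>X. \<forall>b\<in>X. a \<noteq> b \<longrightarrow> (\<exists>l\<in>L. a \<in> l \<and> b \<in> l)"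
    and no3: "\<forall>l\<in>L. \<not> (\<exists>a\<in>X. \<exists>b\<in>X. \<exists>c\<in>X. a \<noteq> b \<and> a \<noteq> c \<and> b \<noteq> c \<and> a \<in> l \<and> b \<in> l \<and> c \<in> l)"
    using assms(5) unfolding freely_contains_complete_graph_def by auto
  have finX: "finite X" using assms(3) finS finite_subset by blast
  have Xne: "X \<noteq> {}" using assms(1,4) by auto
  have key: "\<exists>y\<in>X. y \<noteq> x \<and> y \<in> l" if xX: "x \<in> X" and lL: "l \<in> L" and xl: "x \<in> l" for x l
  proof -
    define T where "T = {l\<in>L. x \<in> l}"
    define f where "f = (\<lambda>y. SOME m. m \<in> L \<and> x \<in> m \<and> y \<in> m)"
    have fy: "f y \<in> L \<and> x \<in> f y \<and> y \<in> f y" if "y \<in> X - {x}" for y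
    proof -
      have "\<exists>m. m \<in> L \<and> x \<in> m \<and> y \<in> m" using col xX that by blast
      then show ?thesis unfolding f_def by (rule someI_ex)
    qed
    have inj: "inj_on f (X - {x})"
    proof (rule inj_onI)
      fix y y' assume y: "y \<in> X - {x}" and y': "y' \<in> X - {x}" and eq: "f y = f y'"
      show "y = y'"
      proof (rule ccontr)
        assume "y \<noteq> y'"
        then show False using fy[OF y] fy[OF y'] eq no3 y y' xX by blast
      qed
    qed
    have sub: "f ` (X - {x}) \<subseteq> T" using fy unfolding T_def by auto
    have finT: "finite T" unfolding T_def using finL by auto
    have "card (f ` (X - {x})) = n - 1"
      using card_image[OF inj] xX finX assms(4) by auto
    moreover have "card T = n - 1" using rr xX assms(3) unfolding T_def by auto
    ultimately have "f ` (X - {x}) = T" using card_subset_eq[OF finT sub] by auto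
    moreover have "l \<in> T" unfolding T_def using lL xl by auto
    ultimately obtain y where "y \<in> X - {x}" "l = f y" by auto
    then show ?thesis using fy by auto
  qed
  have sub: "subspace S L (S - X)"
    unfolding subspace_def
  proof (intro conjI ballI impI)
    show "S - X \<subseteq> S" by auto
    fix l assume lL: "l \<in> L" and "\<exists>a\<in>l. \<exists>b\<in>l. a \<noteq> b \<and> a \<in> S - X \<and> b \<in> S - X"
    then obtain a b where ab: "a \<in> l" "b \<in> l" "a \<noteq> b" "a \<notin> X" "b \<notin> X" by auto
    show "l \<subseteq> S - X"
    proof
      fix z assume zl: "z \<in> l"
      show "z \<in> S - X"
      proof (rule ccontr)
        assume "z \<notin> S - X"
        then have zX: "z \<in> X" using zl lL lS by auto
        obtain y where y: "y \<in> X" "y \<noteq> z" "y \<in> l" using key[OF zX lL zl] by auto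
        have "{a, b, z, y} \<subseteq> l" using ab zl y by auto
        moreover have "a \<noteq> z" "b \<noteq> z" "a \<noteq> y" "b \<noteq> y" using ab zX y by auto
        then have "card {a, b, z, y} = 4" using ab y by auto
        moreover have "finite l" using kk lL by (metis card.infinite zero_neq_numeral)
        ultimately have "4 \<le> card l" by (metis card_mono)
        then show False using kk lL by auto
      qed
    qed
  qed
  have "S - X \<noteq> S" using Xne assms(3) by auto
  moreover have "\<forall>l\<in>L. l \<inter> (S - X) \<noteq> {}"
  proof
    fix l assume lL: "l \<in> L"
    show "l \<inter> (S - X) \<noteq> {}"
    proof
      assume e: "l \<inter> (S - X) = {}"
      have "l \<subseteq> X" using e lL lS by auto
      moreover have "card l = 3" using kk lL by auto
      ultimately obtain a b c where "l = {a, b, c}" "a \<noteq> b" "a \<noteq> c" "b \<noteq> c"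
        by (metis card_3_iff)
      then have "a \<in> X" "b \<in> X" "c \<in> X" "a \<in> l" "b \<in> l" "c \<in> l" "a \<noteq> b" "a \<noteq> c" "b \<noteq> c"
        using \<open>l \<subseteq> X\<close> by auto
      then show False using no3 lL by meson
    qed
  qed
  ultimately show ?thesis using sub unfolding hyperplane_def by auto
qed

end
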